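(* Let $\beta\in\mathbb{N}=\{0,1,2,\dots\}$ and $\alpha\in\mathbb{D}\setminus\{0\}$. Let $\phi_\alpha(z)=\dfrac{\alpha-z}{1-\overline{\alpha}z}$ and, for each non-negative integer $n$, let $v_n:=C_{\phi_\alpha}^*z^n$, where $C_{\phi_\alpha}f=f\circ\phi_\alpha$ acts on $A^2_\beta$ and $^*$ denotes the adjoint in $A^2_\beta$. Then $\langle v_n,v_m\rangle=0$ whenever $|n-m|\ge\beta+3$.
   Context: $\mathbb{D}$ is the open unit disc. For $\beta>-1$, $A^2_\beta$ is the Hilbert space of analytic functions $f(z)=\sum_{n\ge0}\widehat f(n)z^n$ on $\mathbb{D}$ with inner product $\langle f,g\rangle=\sum_{n\ge0}\frac{n!\,\Gamma(2+\beta)}{\Gamma(n+2+\beta)}\widehat f(n)\overline{\widehat g(n)}$ (equivalently the $L^2$ inner product with respect to $(\beta+1)(1-|z|^2)^\beta dA(z)$). *)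

theory Defs
  imports "HOL-Complex_Analysis.Complex_Analysis"
begin

text \<open>Elements of the weighted Bergman space A^2_beta are represented by their
Taylor coefficient sequences.\<close>

definition bergman_weight :: "real \<Rightarrow> nat \<Rightarrow> real" where
  "bergman_weight \<beta> n = fact n * Gamma (2 + \<beta>) / Gamma (real n + 2 + \<beta>)"

definition A2 :: "real \<Rightarrow> (nat \<Rightarrow> complex) set" where
  "A2 \<beta> = {a. summable (\<lambda>n. bergman_weight \<beta> n * (cmod (a n))\<^sup>2)}"

definition A2_inner :: "real \<Rightarrow> (nat \<Rightarrow> complex) \<Rightarrow> (nat \<Rightarrow> complex) \<Rightarrow> complex" where
  "A2_inner \<beta> a b = (\<Sum>n. complex_of_real (bergman_weight \<beta> n) * a n * cnj (b n))"

definition fun_of :: "(nat \<Rightarrow> complex) \<Rightarrow> complex \<Rightarrow> complex" where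
  "fun_of a z = (\<Sum>k. a k * z ^ k)"

definition taylor_coeff :: "(complex \<Rightarrow> complex) \<Rightarrow> nat \<Rightarrow> complex" where
  "taylor_coeff f n = (deriv ^^ n) f 0 / fact n"

definition moebius :: "complex \<Rightarrow> complex \<Rightarrow> complex" where
  "moebius \<alpha> z = (\<alpha> - z) / (1 - cnj \<alpha> * z)"

definition comp_op :: "(complex \<Rightarrow> complex) \<Rightarrow> (nat \<Rightarrow> complex) \<Rightarrow> (nat \<Rightarrow> complex)" where
  "comp_op \<phi> a = taylor_coeff (\<lambda>z. fun_of a (\<phi> z))"

definition monomial :: "nat \<Rightarrow> nat \<Rightarrow> complex" where
  "monomial n = (\<lambda>k. if k = n then 1 else 0)"

definition comp_adj :: "real \<Rightarrow> (complex \<Rightarrow> complex) \<Rightarrow> (nat \<Rightarrow> complex) \<Rightarrow> (nat \<Rightarrow> complex)" where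
  "comp_adj \<beta> \<phi> g = (THE v. v \<in> A2 \<beta> \<and>
      (\<forall>f\<in>A2 \<beta>. A2_inner \<beta> (comp_op \<phi> f) g = A2_inner \<beta> f v))"

end

theory Submission
  imports Defs
begin

definition cw :: "nat \<Rightarrow> nat \<Rightarrow> real" where
  "cw b k = real ((k + b + 1) choose k)"

lemma cw_pos: "cw b k > 0"
  unfolding cw_def by simp

lemma weight_eq: "bergman_weight (real b) k = 1 / cw b k"
proof -
  have g1: "Gamma (2 + real b) = fact (b + 1)"
    using Gamma_fact[of "b+1"] by (simp add: add_ac)
  have g2: "Gamma (real k + 2 + real b) = fact (k + b + 1)"
    using Gamma_fact[of "k+b+1"] by (simp add: add_ac)
  have "real ((k + b + 1) choose k) = fact (k+b+1) / (fact k * fact (b+1))"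
    by (subst binomial_fact) auto
  then show ?thesis unfolding bergman_weight_def cw_def g1 g2
    by (simp add: field_simps)
qed

lemma weight_pos: "bergman_weight (real b) k > 0"
  using cw_pos[of b k] weight_eq by simp

lemma negbin:
  fixes x :: complex
  assumes "norm x < 1"
  shows "(\<lambda>k. complex_of_real (cw b k) * x ^ k) sums inverse ((1 - x) ^ (b + 2))"
proof -
  have "norm (-x) < 1" using assms by simp
  from one_plus_neg_powr_powser[OF this, of "of_nat (b+2)"]
  have "(\<lambda>n. (- 1) ^ n * ((of_nat (b+2) + of_nat n - 1) gchoose n) * (- x) ^ n) sums (1 + - x) powr - of_nat (b+2)" .
  moreover have "(1 + - x) powr - of_nat (b+2) = inverse ((1 - x) ^ (b + 2))"
  proof -
    have "1 - x \<noteq> 0" using assms by auto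
    have "(1 + - x) powr - of_nat (b+2) = inverse ((1 + -x) powr of_nat (b+2))" by (rule powr_minus)
    also have "\<dots> = inverse ((1-x)^(b+2))" using \<open>1 - x \<noteq> 0\<close> by (subst powr_nat') auto
    finally show ?thesis .
  qed
  moreover have "(- 1) ^ n * ((of_nat (b+2) + of_nat n - 1) gchoose n) * (- x) ^ n
      = complex_of_real (cw b n) * x ^ n" for n
  proof -
    have "(of_nat (b+2) + of_nat n - 1 :: complex) = of_nat (n + b + 1)" by simp
    then have "((of_nat (b+2) + of_nat n - 1 :: complex) gchoose n) = of_nat ((n+b+1) choose n)"
      by (simp add: binomial_gbinomial add_ac)
    moreover have "(- 1) ^ n * (- x) ^ n = x ^ n"
      by (metis mult_minus1 power_minus power_mult_distrib minus_minus mult_1)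
    ultimately show ?thesis unfolding cw_def
      by (metis (no_types, lifting) mult.assoc mult.commute of_real_of_nat_eq)
  qed
  ultimately show ?thesis by simp
qed

lemma summable_cw:
  assumes "0 \<le> r" "r < 1"
  shows "summable (\<lambda>k. cw b k * r ^ k)"
proof -
  have "norm (complex_of_real r) < 1" using assms by simp
  from sums_summable[OF negbin[OF this, of b]]
  have "summable (\<lambda>k. complex_of_real (cw b k * r ^ k))" by simp
  then show ?thesis by (simp only: summable_complex_of_real)
qed


lemma moeb_bound:
  assumes a: "norm \<alpha> < 1" and s: "0 \<le> s" "norm w \<le> s" "s * (1 + norm \<alpha>) < 1 - norm \<alpha>"
  shows "norm (moebius \<alpha> w) \<le> (norm \<alpha> + s) / (1 - norm \<alpha> * s)"
    "(norm \<alpha> + s) / (1 - norm \<alpha> * s) < 1"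
    "1 - cnj \<alpha> * w \<noteq> 0"
proof -
  have "norm \<alpha> * s \<le> s" using s a by (intro mult_left_le_one_le) auto
  moreover have "s \<le> s * (1 + norm \<alpha>)" using s by (simp add: algebra_simps)
  ultimately have as: "norm \<alpha> * s < 1" using s norm_ge_zero[of \<alpha>] by linarith
  have d: "norm (1 - cnj \<alpha> * w) \<ge> 1 - norm \<alpha> * s"
  proof -
    have "norm (cnj \<alpha> * w) \<le> norm \<alpha> * s" using s by (simp add: norm_mult mult_left_mono)
    moreover have "norm (1 - cnj \<alpha> * w) \<ge> 1 - norm (cnj \<alpha> * w)"
      by (metis norm_one norm_triangle_ineq2)
    ultimately show ?thesis by linarith
  qed
  have n: "norm (\<alpha> - w) \<le> norm \<alpha> + s" using s
    by (smt (verit) norm_triangle_ineq4)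
  show "1 - cnj \<alpha> * w \<noteq> 0" using d as by auto
  show "norm (moebius \<alpha> w) \<le> (norm \<alpha> + s) / (1 - norm \<alpha> * s)"
    unfolding moebius_def norm_divide
    using d n as s(1) norm_ge_zero[of \<alpha>] by (intro frac_le) auto
  show "(norm \<alpha> + s) / (1 - norm \<alpha> * s) < 1"
    using as s by (simp add: field_simps)
qed

definition RR :: "complex \<Rightarrow> real" where "RR \<alpha> = (1 - norm \<alpha>) / 2"
definition rr :: "complex \<Rightarrow> real" where "rr \<alpha> = (1 - norm \<alpha>) / 4"
definition rho :: "complex \<Rightarrow> real" where "rho \<alpha> = (norm \<alpha> + rr \<alpha>) / (1 - norm \<alpha> * rr \<alpha>)"

lemma rr_facts:
  assumes "norm \<alpha> < 1"
  shows "0 < rr \<alpha>" "rr \<alpha> < RR \<alpha>" "0 \<le> rho \<alpha>" "rho \<alpha> < 1"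
    "\<And>w. norm w \<le> rr \<alpha> \<Longrightarrow> norm (moebius \<alpha> w) \<le> rho \<alpha>"
    "\<And>w. norm w < RR \<alpha> \<Longrightarrow> norm (moebius \<alpha> w) < 1 \<and> 1 - cnj \<alpha> * w \<noteq> 0"
proof -
  show "0 < rr \<alpha>" "rr \<alpha> < RR \<alpha>" using assms unfolding rr_def RR_def by auto
  have pp: "(1 - norm \<alpha>) * (3 - norm \<alpha>) > 0" using assms by (intro mult_pos_pos) auto
  have k: "rr \<alpha> * (1 + norm \<alpha>) < 1 - norm \<alpha>" using assms pp unfolding rr_def
    by (simp add: field_simps)
  note mb = moeb_bound[OF assms, of "rr \<alpha>"]
  show "rho \<alpha> < 1" using mb(2)[of 0, OF _ _ k] \<open>0 < rr \<alpha>\<close> unfolding rho_def by auto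
  show "\<And>w. norm w \<le> rr \<alpha> \<Longrightarrow> norm (moebius \<alpha> w) \<le> rho \<alpha>"
    using mb(1)[OF _ _ k] \<open>0 < rr \<alpha>\<close> unfolding rho_def by auto
  have "norm \<alpha> * rr \<alpha> \<le> rr \<alpha>" using assms \<open>0 < rr \<alpha>\<close> by (intro mult_left_le_one_le) auto
  moreover have "rr \<alpha> \<le> rr \<alpha> * (1 + norm \<alpha>)" using \<open>0 < rr \<alpha>\<close> by (simp add: algebra_simps)
  ultimately have "norm \<alpha> * rr \<alpha> < 1" using k norm_ge_zero[of \<alpha>] by linarith
  then show "0 \<le> rho \<alpha>" unfolding rho_def using \<open>0 < rr \<alpha>\<close> by auto
  fix w :: complex assume w: "norm w < RR \<alpha>"
  have k2: "norm w * (1 + norm \<alpha>) < 1 - norm \<alpha>"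
  proof -
    have pp2: "(1 - norm \<alpha>) * (1 - norm \<alpha>) > 0" using assms by (intro mult_pos_pos) auto
    have "norm w * (1 + norm \<alpha>) \<le> RR \<alpha> * (1 + norm \<alpha>)" using w by (intro mult_right_mono) auto
    also have "RR \<alpha> * (1 + norm \<alpha>) < 1 - norm \<alpha>" using assms pp2 unfolding RR_def
      by (simp add: field_simps)
    finally show ?thesis .
  qed
  note mb2 = moeb_bound[OF assms, of "norm w" w]
  show "norm (moebius \<alpha> w) < 1 \<and> 1 - cnj \<alpha> * w \<noteq> 0"
    using mb2(1)[OF _ _ k2] mb2(2)[OF _ _ k2] mb2(3)[OF _ _ k2] by auto
qed

lemma moeb_holo:
  assumes "\<And>w. w \<in> S \<Longrightarrow> 1 - cnj \<alpha> * w \<noteq> 0"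
  shows "moebius \<alpha> holomorphic_on S"
  unfolding moebius_def[abs_def] using assms by (intro holomorphic_intros) auto

lemma fun_of_deriv:
  assumes sa: "\<And>\<rho>. 0 \<le> \<rho> \<Longrightarrow> \<rho> < 1 \<Longrightarrow> summable (\<lambda>k. norm (a k) * \<rho> ^ k)"
    and y: "norm y < 1"
  shows "fun_of a field_differentiable (at y)"
proof -
  have "summable (\<lambda>n. a n * z ^ n)" if "norm z < 1" for z
  proof -
    have "summable (\<lambda>k. norm (a k * z ^ k))"
      using sa[of "norm z"] that by (simp add: norm_mult norm_power)
    then show ?thesis by (rule summable_norm_cancel)
  qed
  from termdiffs_strong'[of 1 a y, OF this y]
  show ?thesis unfolding fun_of_def[abs_def] field_differentiable_def by blast
qed

lemma fun_of_holo:
  assumes sa: "\<And>\<rho>. 0 \<le> \<rho> \<Longrightarrow> \<rho> < 1 \<Longrightarrow> summable (\<lambda>k. norm (a k) * \<rho> ^ k)"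
  shows "fun_of a holomorphic_on ball 0 1"
  using fun_of_deriv[OF sa] by (auto simp: holomorphic_on_def field_differentiable_at_within)


definition A :: "complex \<Rightarrow> nat \<Rightarrow> nat \<Rightarrow> complex" where
  "A \<alpha> n k = taylor_coeff (\<lambda>z. moebius \<alpha> z ^ k) n"

lemma cauchy_tc:
  assumes g: "g holomorphic_on ball 0 (RR \<alpha>)" and a: "norm \<alpha> < 1"
  shows "((\<lambda>u. g u / u ^ Suc n) has_contour_integral (2*pi*\<i> * taylor_coeff g n)) (circlepath 0 (rr \<alpha>))"
proof -
  have sub: "cball 0 (rr \<alpha>) \<subseteq> ball 0 (RR \<alpha>)" using rr_facts[OF a] by auto
  have "continuous_on (cball 0 (rr \<alpha>)) g"
    using holomorphic_on_imp_continuous_on[OF holomorphic_on_subset[OF g sub]] .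
  moreover have "g holomorphic_on ball 0 (rr \<alpha>)"
    using holomorphic_on_subset[OF g subset_ball[of "rr \<alpha>" "RR \<alpha>"]] rr_facts[OF a] by auto
  moreover have "0 \<in> ball (0::complex) (rr \<alpha>)" using rr_facts[OF a] by auto
  ultimately have "((\<lambda>u. g u / (u - 0) ^ Suc n) has_contour_integral
      ((2 * pi * \<i>) / (fact n) * (deriv ^^ n) g 0)) (circlepath 0 (rr \<alpha>))"
    by (rule Cauchy_has_contour_integral_higher_derivative_circlepath)
  then show ?thesis unfolding taylor_coeff_def by simp
qed

lemma moeb_pow_holo:
  assumes a: "norm \<alpha> < 1"
  shows "(\<lambda>z. moebius \<alpha> z ^ k) holomorphic_on ball 0 (RR \<alpha>)"
proof -
  have "moebius \<alpha> holomorphic_on ball 0 (RR \<alpha>)"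
    using rr_facts(6)[OF a] by (intro moeb_holo) auto
  then show ?thesis by (intro holomorphic_intros)
qed

lemma A_bound:
  assumes a: "norm \<alpha> < 1"
  shows "norm (A \<alpha> n k) \<le> rho \<alpha> ^ k / rr \<alpha> ^ n"
proof -
  note rf = rr_facts[OF a]
  have ci: "((\<lambda>u. moebius \<alpha> u ^ k / u ^ Suc n) has_contour_integral (2*pi*\<i> * A \<alpha> n k)) (circlepath 0 (rr \<alpha>))"
    unfolding A_def by (rule cauchy_tc[OF moeb_pow_holo[OF a] a])
  have "norm (2*pi*\<i> * A \<alpha> n k) \<le> (rho \<alpha> ^ k / rr \<alpha> ^ Suc n) * (2 * pi * rr \<alpha>)"
  proof (rule has_contour_integral_bound_circlepath[OF ci])
    show "0 \<le> rho \<alpha> ^ k / rr \<alpha> ^ Suc n" using rf by auto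
    show "0 < rr \<alpha>" using rf by auto
    fix x :: complex assume "norm (x - 0) = rr \<alpha>"
    then have x: "norm x = rr \<alpha>" by simp
    have "norm (moebius \<alpha> x) ^ k \<le> rho \<alpha> ^ k"
      using rf(5)[of x] x by (intro power_mono) auto
    moreover have "norm (moebius \<alpha> x ^ k / x ^ Suc n) = norm (moebius \<alpha> x) ^ k / rr \<alpha> ^ Suc n"
      using x by (simp add: norm_divide norm_power del: power_Suc)
    ultimately show "norm (moebius \<alpha> x ^ k / x ^ Suc n) \<le> rho \<alpha> ^ k / rr \<alpha> ^ Suc n"
      using rf by (simp add: divide_right_mono del: power_Suc)
  qed
  moreover have "norm (2*pi*\<i> * A \<alpha> n k) = (2*pi) * norm (A \<alpha> n k)" by (simp add: norm_mult)
  moreover have "(rho \<alpha> ^ k / rr \<alpha> ^ Suc n) * (2 * pi * rr \<alpha>) = (2*pi) * (rho \<alpha> ^ k / rr \<alpha> ^ n)"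
    using rf(1) by (simp add: field_simps)
  ultimately have "(2*pi) * norm (A \<alpha> n k) \<le> (2*pi) * (rho \<alpha> ^ k / rr \<alpha> ^ n)" by simp
  then show ?thesis by (rule mult_left_le_imp_le) simp
qed

lemma comp_coeff:
  assumes a: "norm \<alpha> < 1"
    and sa: "\<And>\<rho>. 0 \<le> \<rho> \<Longrightarrow> \<rho> < 1 \<Longrightarrow> summable (\<lambda>k. norm (c k) * \<rho> ^ k)"
  shows "(\<lambda>k. c k * A \<alpha> n k) sums taylor_coeff (\<lambda>z. fun_of c (moebius \<alpha> z)) n"
proof -
  note rf = rr_facts[OF a]
  define r where "r = rr \<alpha>"
  define g where "g = (\<lambda>z. fun_of c (moebius \<alpha> z))"
  have hg: "g holomorphic_on ball 0 (RR \<alpha>)"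
  proof -
    have "(fun_of c \<circ> moebius \<alpha>) holomorphic_on ball 0 (RR \<alpha>)"
    proof (rule holomorphic_on_compose_gen)
      show "moebius \<alpha> holomorphic_on ball 0 (RR \<alpha>)"
        using rf(6) by (intro moeb_holo) auto
      show "fun_of c holomorphic_on ball 0 1" by (rule fun_of_holo[OF sa])
      show "moebius \<alpha> ` ball 0 (RR \<alpha>) \<subseteq> ball 0 1" using rf(6) by auto
    qed
    then show ?thesis unfolding g_def o_def .
  qed
  have cg: "((\<lambda>u. g u / u ^ Suc n) has_contour_integral (2*pi*\<i> * taylor_coeff g n)) (circlepath 0 r)"
    unfolding r_def by (rule cauchy_tc[OF hg a])
  define f where "f = (\<lambda>k u. c k * (moebius \<alpha> u ^ k / u ^ Suc n))"
  have ck: "(f k has_contour_integral (c k * (2*pi*\<i> * A \<alpha> n k))) (circlepath 0 r)" for k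
    unfolding f_def r_def A_def
    by (intro has_contour_integral_lmul cauchy_tc[OF moeb_pow_holo[OF a] a])
  have cN: "((\<lambda>u. \<Sum>k<N. f k u) has_contour_integral (\<Sum>k<N. c k * (2*pi*\<i> * A \<alpha> n k))) (circlepath 0 r)" for N
    by (intro has_contour_integral_sum ck) auto
  have ul: "uniform_limit (sphere 0 r) (\<lambda>N u. \<Sum>k<N. f k u) (\<lambda>u. suminf (\<lambda>k. f k u)) sequentially"
  proof (rule Weierstrass_m_test)
    show "summable (\<lambda>k. norm (c k) * rho \<alpha> ^ k / r ^ Suc n)"
      using sa[of "rho \<alpha>"] rf by (intro summable_divide) auto
    fix k and u :: complex assume "u \<in> sphere 0 r"
    then have u: "norm u = r" by simp
    have "norm (moebius \<alpha> u) ^ k \<le> rho \<alpha> ^ k"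
      using rf(5)[of u] u unfolding r_def by (intro power_mono) auto
    then have "norm (c k) * norm (moebius \<alpha> u) ^ k \<le> norm (c k) * rho \<alpha> ^ k"
      by (intro mult_left_mono) auto
    then show "norm (f k u) \<le> norm (c k) * rho \<alpha> ^ k / r ^ Suc n"
      unfolding f_def using u rf unfolding r_def
      by (simp add: norm_mult norm_divide norm_power divide_right_mono mult.assoc[symmetric])
  qed
  have "r > 0" using rf unfolding r_def by auto
  have ev: "\<forall>\<^sub>F N in sequentially. (\<lambda>u. \<Sum>k<N. f k u) contour_integrable_on circlepath 0 r"
    using has_contour_integral_integrable[OF cN] by (intro always_eventually) auto
  from contour_integral_uniform_limit_circlepath(2)[OF ev ul trivial_limit_sequentially \<open>r > 0\<close>]
  have lim: "(\<lambda>N. contour_integral (circlepath 0 r) (\<lambda>u. \<Sum>k<N. f k u)) \<longlonglongrightarrow>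
      contour_integral (circlepath 0 r) (\<lambda>u. suminf (\<lambda>k. f k u))" .
  have e1: "contour_integral (circlepath 0 r) (\<lambda>u. \<Sum>k<N. f k u) = (\<Sum>k<N. c k * (2*pi*\<i> * A \<alpha> n k))" for N
    using cN by (rule contour_integral_unique)
  have e2: "contour_integral (circlepath 0 r) (\<lambda>u. suminf (\<lambda>k. f k u)) =
            contour_integral (circlepath 0 r) (\<lambda>u. g u / u ^ Suc n)"
  proof (rule contour_integral_eq)
    fix u assume "u \<in> path_image (circlepath 0 r)"
    then have u: "norm u = r" using \<open>r > 0\<close> by (simp add: path_image_circlepath)
    have nm: "norm (moebius \<alpha> u) < 1"
      using rf(5)[of u] rf(4) u unfolding r_def by auto
    have "summable (\<lambda>k. norm (c k * moebius \<alpha> u ^ k))"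
      using sa[of "norm (moebius \<alpha> u)"] nm by (simp add: norm_mult norm_power)
    then have sm: "summable (\<lambda>k. c k * moebius \<alpha> u ^ k)" by (rule summable_norm_cancel)
    have "suminf (\<lambda>k. f k u) = suminf (\<lambda>k. c k * moebius \<alpha> u ^ k / u ^ Suc n)"
      unfolding f_def by simp
    also have "\<dots> = suminf (\<lambda>k. c k * moebius \<alpha> u ^ k) / u ^ Suc n"
      using sm by (rule suminf_divide)
    finally show "suminf (\<lambda>k. f k u) = g u / u ^ Suc n"
      unfolding g_def fun_of_def by simp
  qed
  have "(\<lambda>N. (\<Sum>k<N. c k * (2*pi*\<i> * A \<alpha> n k))) \<longlonglongrightarrow> 2*pi*\<i> * taylor_coeff g n"
    using lim unfolding e1 e2 contour_integral_unique[OF cg] .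
  then have "(\<lambda>N. (\<Sum>k<N. c k * (2*pi*\<i> * A \<alpha> n k)) / (2*pi*\<i>)) \<longlonglongrightarrow> 2*pi*\<i> * taylor_coeff g n / (2*pi*\<i>)"
    by (intro tendsto_divide) auto
  moreover have "(\<Sum>k<N. c k * (2*pi*\<i> * A \<alpha> n k)) / (2*pi*\<i>) = (\<Sum>k<N. c k * A \<alpha> n k)" for N
    unfolding sum_divide_distrib by (intro sum.cong refl) (simp add: algebra_simps)
  ultimately show ?thesis unfolding sums_def g_def by simp
qed


abbreviation bw :: "nat \<Rightarrow> nat \<Rightarrow> real" where "bw b k \<equiv> bergman_weight (real b) k"

lemma A2_abs:
  assumes a: "a \<in> A2 (real b)" and r: "0 \<le> \<rho>" "\<rho> < 1"
  shows "summable (\<lambda>k. norm (a k) * \<rho> ^ k)"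
proof (rule summable_comparison_test)
  have s1: "summable (\<lambda>k. bw b k * (norm (a k))\<^sup>2)" using a unfolding A2_def by simp
  have s2: "summable (\<lambda>k. cw b k * (\<rho>\<^sup>2) ^ k)"
    using r by (intro summable_cw) (auto simp: power_less_one_iff abs_square_less_1)
  show "summable (\<lambda>k. (bw b k * (norm (a k))\<^sup>2 + cw b k * (\<rho>\<^sup>2) ^ k) / 2)"
    using s1 s2 by (intro summable_divide summable_add)
  show "\<exists>N. \<forall>k\<ge>N. norm (norm (a k) * \<rho> ^ k) \<le> (bw b k * (norm (a k))\<^sup>2 + cw b k * (\<rho>\<^sup>2) ^ k) / 2"
  proof (intro exI allI impI)
    fix k :: nat
    define x where "x = norm (a k)"
    define y where "y = \<rho> ^ k"
    define c where "c = cw b k"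
    have c: "c > 0" unfolding c_def by (rule cw_pos)
    have x: "x \<ge> 0" "y \<ge> 0" unfolding x_def y_def using r by auto
    have "0 \<le> (x - c*y)^2 / c" using c by simp
    also have "(x - c*y)^2 / c = x^2/c - 2*x*y + c*y^2"
      using c by (simp add: field_simps power2_eq_square)
    finally have "2*x*y \<le> x^2/c + c*y^2" by simp
    moreover have "bw b k = 1 / c" unfolding c_def by (rule weight_eq)
    moreover have "(\<rho>\<^sup>2) ^ k = y^2" unfolding y_def by (simp add: power2_eq_square power_mult_distrib)
    ultimately show "norm (norm (a k) * \<rho> ^ k) \<le> (bw b k * (norm (a k))\<^sup>2 + cw b k * (\<rho>\<^sup>2) ^ k) / 2"
      using x unfolding x_def[symmetric] y_def[symmetric] c_def[symmetric]
      by (simp add: abs_mult)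
  qed
qed

definition V :: "nat \<Rightarrow> complex \<Rightarrow> nat \<Rightarrow> nat \<Rightarrow> complex" where
  "V b \<alpha> n k = of_real (bw b n) * cnj (A \<alpha> n k) / of_real (bw b k)"

lemma V_A2:
  assumes a: "norm \<alpha> < 1"
  shows "V b \<alpha> n \<in> A2 (real b)"
proof -
  note rf = rr_facts[OF a]
  have "summable (\<lambda>k. (bw b n ^ 2 / rr \<alpha> ^ (2*n)) * (cw b k * (rho \<alpha> ^ 2) ^ k))"
    using rf by (intro summable_mult summable_cw) (auto simp: power_less_one_iff abs_square_less_1)
  then have "summable (\<lambda>k. bw b k * (norm (V b \<alpha> n k))\<^sup>2)"
  proof (rule summable_comparison_test[rotated], intro exI allI impI)
    fix k :: nat
    have wk: "bw b k = 1 / cw b k" by (rule weight_eq)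
    have cpos: "cw b k > 0" by (rule cw_pos)
    have wn: "bw b n > 0" by (rule weight_pos)
    have "norm (V b \<alpha> n k) = bw b n * norm (A \<alpha> n k) * cw b k"
      unfolding V_def wk using cpos wn by (simp add: norm_mult norm_divide)
    then have e: "bw b k * (norm (V b \<alpha> n k))\<^sup>2 = bw b n ^ 2 * cw b k * (norm (A \<alpha> n k))\<^sup>2"
      unfolding wk using cpos by (simp add: field_simps power2_eq_square)
    have "(norm (A \<alpha> n k))\<^sup>2 \<le> (rho \<alpha> ^ k / rr \<alpha> ^ n)\<^sup>2"
      using A_bound[OF a, of n k] by (intro power_mono) auto
    also have "\<dots> = (rho \<alpha> ^ 2) ^ k / rr \<alpha> ^ (2*n)"
      by (simp add: power_divide power_mult[symmetric] mult.commute)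
    finally have "bw b n ^ 2 * cw b k * (norm (A \<alpha> n k))\<^sup>2 \<le> bw b n ^ 2 * cw b k * ((rho \<alpha> ^ 2) ^ k / rr \<alpha> ^ (2*n))"
      using cpos by (intro mult_left_mono) auto
    then show "norm (bw b k * (norm (V b \<alpha> n k))\<^sup>2) \<le> (bw b n ^ 2 / rr \<alpha> ^ (2*n)) * (cw b k * (rho \<alpha> ^ 2) ^ k)"
      unfolding e using weight_pos[of b k] cpos by (simp add: field_simps)
  qed
  then show ?thesis unfolding A2_def by simp
qed

lemma inner_mono_right:
  "A2_inner (real b) u (monomial n) = of_real (bw b n) * u n"
proof -
  have "(\<lambda>j. complex_of_real (bw b j) * u j * cnj (monomial n j)) = (\<lambda>j. if j = n then of_real (bw b n) * u n else 0)"
    by (auto simp: monomial_def)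
  then show ?thesis unfolding A2_inner_def using sums_single[of n "\<lambda>_. of_real (bw b n) * u n"]
    by (simp add: sums_iff)
qed

lemma inner_mono_left:
  "A2_inner (real b) (monomial n) u = of_real (bw b n) * cnj (u n)"
proof -
  have "(\<lambda>j. complex_of_real (bw b j) * monomial n j * cnj (u j)) = (\<lambda>j. if j = n then of_real (bw b n) * cnj (u n) else 0)"
    by (auto simp: monomial_def)
  then show ?thesis unfolding A2_inner_def using sums_single[of n "\<lambda>_. of_real (bw b n) * cnj (u n)"]
    by (simp add: sums_iff)
qed

lemma mono_A2: "monomial n \<in> A2 (real b)"
proof -
  have "(\<lambda>j. bw b j * (norm (monomial n j))\<^sup>2) = (\<lambda>j. if j = n then bw b n else 0)"
    by (auto simp: monomial_def)
  then show ?thesis unfolding A2_def using sums_single[of n "\<lambda>_. bw b n"]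
    by (simp add: sums_iff)
qed

lemma adj_prop:
  assumes a: "norm \<alpha> < 1" and f: "f \<in> A2 (real b)"
  shows "A2_inner (real b) (comp_op (moebius \<alpha>) f) (monomial n) = A2_inner (real b) f (V b \<alpha> n)"
proof -
  have cc: "(\<lambda>k. f k * A \<alpha> n k) sums comp_op (moebius \<alpha>) f n"
    unfolding comp_op_def by (rule comp_coeff[OF a A2_abs[OF f]])
  have "(\<lambda>k. of_real (bw b k) * f k * cnj (V b \<alpha> n k)) = (\<lambda>k. of_real (bw b n) * (f k * A \<alpha> n k))"
  proof
    fix k
    have "bw b k \<noteq> 0" using weight_pos[of b k] by simp
    then show "of_real (bw b k) * f k * cnj (V b \<alpha> n k) = of_real (bw b n) * (f k * A \<alpha> n k)"
      unfolding V_def by (simp add: field_simps)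
  qed
  then have "A2_inner (real b) f (V b \<alpha> n) = of_real (bw b n) * comp_op (moebius \<alpha>) f n"
    unfolding A2_inner_def using sums_mult[OF cc, of "of_real (bw b n)"] by (simp add: sums_iff)
  then show ?thesis by (simp add: inner_mono_right)
qed

lemma comp_adj_eq:
  assumes a: "norm \<alpha> < 1"
  shows "comp_adj (real b) (moebius \<alpha>) (monomial n) = V b \<alpha> n"
  unfolding comp_adj_def
proof (rule the_equality)
  show "V b \<alpha> n \<in> A2 (real b) \<and> (\<forall>f\<in>A2 (real b). A2_inner (real b) (comp_op (moebius \<alpha>) f) (monomial n) = A2_inner (real b) f (V b \<alpha> n))"
    using V_A2[OF a] adj_prop[OF a] by blast
  fix v assume v: "v \<in> A2 (real b) \<and> (\<forall>f\<in>A2 (real b). A2_inner (real b) (comp_op (moebius \<alpha>) f) (monomial n) = A2_inner (real b) f v)"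
  show "v = V b \<alpha> n"
  proof
    fix j
    have "A2_inner (real b) (monomial j) v = A2_inner (real b) (monomial j) (V b \<alpha> n)"
      using v adj_prop[OF a mono_A2[of j b]] mono_A2[of j b] by metis
    then have "of_real (bw b j) * cnj (v j) = of_real (bw b j) * cnj (V b \<alpha> n j)"
      by (simp add: inner_mono_left)
    then show "v j = V b \<alpha> n j" using weight_pos[of b j] by simp
  qed
qed

lemma inner_VV:
  assumes a: "norm \<alpha> < 1"
  shows "A2_inner (real b) (V b \<alpha> n) (V b \<alpha> m) = of_real (bw b m) * taylor_coeff (\<lambda>z. fun_of (V b \<alpha> n) (moebius \<alpha> z)) m"
proof -
  have cc: "(\<lambda>k. V b \<alpha> n k * A \<alpha> m k) sums taylor_coeff (\<lambda>z. fun_of (V b \<alpha> n) (moebius \<alpha> z)) m"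
    by (rule comp_coeff[OF a A2_abs[OF V_A2[OF a]]])
  have "(\<lambda>k. of_real (bw b k) * V b \<alpha> n k * cnj (V b \<alpha> m k)) = (\<lambda>k. of_real (bw b m) * (V b \<alpha> n k * A \<alpha> m k))"
  proof
    fix k
    have "bw b k \<noteq> 0" using weight_pos[of b k] by simp
    then show "of_real (bw b k) * V b \<alpha> n k * cnj (V b \<alpha> m k) = of_real (bw b m) * (V b \<alpha> n k * A \<alpha> m k)"
      unfolding V_def[of b \<alpha> m] by (simp add: field_simps)
  qed
  then show ?thesis
    unfolding A2_inner_def using sums_mult[OF cc, of "of_real (bw b m)"] by (simp add: sums_iff)
qed


lemma tc_unique:
  assumes e: "\<epsilon> > 0" and s: "\<And>t. norm t < \<epsilon> \<Longrightarrow> (\<lambda>j. e j * t ^ j) sums g t"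
  shows "taylor_coeff g j = e j"
proof -
  define F where "F = Abs_fps e"
  have "summable (\<lambda>n. fps_nth F n * (of_real (\<epsilon>/2)) ^ n)"
    using s[of "of_real (\<epsilon>/2)"] e unfolding F_def by (auto simp: sums_iff)
  from conv_radius_geI[OF this] have "fps_conv_radius F \<ge> \<epsilon>/2"
    unfolding fps_conv_radius_def using e by simp
  then have r: "fps_conv_radius F > 0" using e
    by (meson ereal_less(2) half_gt_zero order_less_le_trans)
  have ev: "eventually (\<lambda>z. eval_fps F z = g z) (nhds 0)"
    unfolding eventually_nhds_metric
  proof (intro exI conjI allI impI)
    show "\<epsilon> > 0" by fact
    fix z :: complex assume "dist z 0 < \<epsilon>"
    then have "(\<lambda>j. e j * z ^ j) sums g z" using s by simp
    then show "eval_fps F z = g z" unfolding eval_fps_def F_def by (simp add: sums_iff)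
  qed
  have "g has_fps_expansion F" unfolding has_fps_expansion_def using r ev by simp
  from fps_nth_fps_expansion[OF this, of j] show ?thesis
    unfolding taylor_coeff_def F_def by simp
qed

lemma poly_tc_zero:
  assumes e: "\<epsilon> > 0" and F: "finite S"
    and g: "\<And>u. norm u < \<epsilon> \<Longrightarrow> g u = (\<Sum>x\<in>S. d x * u ^ deg x)"
    and m: "\<And>x. x \<in> S \<Longrightarrow> deg x \<noteq> m"
  shows "taylor_coeff g m = 0"
proof -
  define e where "e = (\<lambda>j. \<Sum>x\<in>S. if deg x = j then d x else 0)"
  have "(\<lambda>j. e j * u ^ j) sums g u" if u: "norm u < \<epsilon>" for u
  proof -
    have "(\<lambda>j. if j = deg x then d x * u ^ deg x else 0) sums (d x * u ^ deg x)" for x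
      by (rule sums_single)
    then have "(\<lambda>j. \<Sum>x\<in>S. if j = deg x then d x * u ^ deg x else 0) sums (\<Sum>x\<in>S. d x * u ^ deg x)"
      by (rule sums_sum)
    moreover have "(\<lambda>j. \<Sum>x\<in>S. if j = deg x then d x * u ^ deg x else 0) = (\<lambda>j. e j * u ^ j)"
      unfolding e_def by (auto simp: sum_distrib_right intro!: sum.cong)
    ultimately show ?thesis using g[OF u] by simp
  qed
  from tc_unique[OF e this] have "taylor_coeff g m = e m" .
  also have "e m = 0" unfolding e_def using m by (intro sum.neutral) auto
  finally show ?thesis .
qed


definition K :: "nat \<Rightarrow> complex \<Rightarrow> nat \<Rightarrow> complex" where
  "K b z k = of_real (cw b k) * cnj z ^ k"

lemma fun_of_V:
  assumes a: "norm \<alpha> < 1" and z: "norm z < 1"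
  shows "fun_of (V b \<alpha> n) z = of_real (bw b n) * cnj (taylor_coeff (\<lambda>t. fun_of (K b z) (moebius \<alpha> t)) n)"
proof -
  have sa: "summable (\<lambda>k. norm (K b z k) * \<rho> ^ k)" if "0 \<le> \<rho>" "\<rho> < 1" for \<rho>
  proof -
    have "norm z * \<rho> < 1" using z that
      by (metis le_less_trans mult_left_le_one_le norm_ge_zero order.strict_implies_order)
    then have "summable (\<lambda>k. cw b k * (norm z * \<rho>) ^ k)" using that by (intro summable_cw) auto
    moreover have "norm (K b z k) * \<rho> ^ k = cw b k * (norm z * \<rho>) ^ k" for k
      unfolding K_def using cw_pos[of b k] by (simp add: norm_mult norm_power power_mult_distrib)
    ultimately show ?thesis by simp
  qed
  have cc: "(\<lambda>k. K b z k * A \<alpha> n k) sums taylor_coeff (\<lambda>t. fun_of (K b z) (moebius \<alpha> t)) n"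
    by (rule comp_coeff[OF a sa])
  then have "(\<lambda>k. cnj (K b z k * A \<alpha> n k)) sums cnj (taylor_coeff (\<lambda>t. fun_of (K b z) (moebius \<alpha> t)) n)"
    by (simp only: sums_cnj)
  from sums_mult[OF this, of "of_real (bw b n)"]
  have s: "(\<lambda>k. of_real (bw b n) * cnj (K b z k * A \<alpha> n k)) sums (of_real (bw b n) * cnj (taylor_coeff (\<lambda>t. fun_of (K b z) (moebius \<alpha> t)) n))" .
  have "V b \<alpha> n k * z ^ k = of_real (bw b n) * cnj (K b z k * A \<alpha> n k)" for k
    unfolding V_def K_def weight_eq[of b k] using cw_pos[of b k] by simp
  then show ?thesis using s unfolding fun_of_def by (simp add: sums_iff)
qed

definition Bc :: "nat \<Rightarrow> complex \<Rightarrow> nat \<Rightarrow> complex" where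
  "Bc b \<alpha> i = of_nat ((b+2) choose i) * (- cnj \<alpha>) ^ i"

lemma poly_expand: "(1 - cnj \<alpha> * t) ^ (b+2) = (\<Sum>i\<le>b+2. Bc b \<alpha> i * t ^ i)"
proof -
  have "(1 - cnj \<alpha> * t) ^ (b+2) = ((- cnj \<alpha> * t) + 1) ^ (b+2)" by simp
  also have "\<dots> = (\<Sum>i\<le>b+2. of_nat ((b+2) choose i) * (- cnj \<alpha> * t) ^ i * 1 ^ (b+2-i))"
    by (rule binomial_ring)
  also have "\<dots> = (\<Sum>i\<le>b+2. Bc b \<alpha> i * t ^ i)"
    unfolding Bc_def by (intro sum.cong refl) (simp add: power_mult_distrib[symmetric] mult.assoc)
  finally show ?thesis .
qed

definition Ec :: "nat \<Rightarrow> complex \<Rightarrow> complex \<Rightarrow> nat \<Rightarrow> complex" where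
  "Ec b \<alpha> q j = (\<Sum>i\<le>b+2. if i \<le> j then Bc b \<alpha> i * of_real (cw b (j-i)) * q ^ (j-i) else 0)"

lemma prod_series:
  assumes "norm (q * t) < 1"
  shows "(\<lambda>j. Ec b \<alpha> q j * t ^ j) sums ((1 - cnj \<alpha> * t) ^ (b+2) * inverse ((1 - q * t) ^ (b+2)))"
proof -
  define S where "S = inverse ((1 - q * t) ^ (b+2))"
  have nb: "(\<lambda>j. of_real (cw b j) * (q * t) ^ j) sums S" unfolding S_def by (rule negbin[OF assms])
  have sh: "(\<lambda>j. if i \<le> j then of_real (cw b (j-i)) * (q * t) ^ (j-i) else 0) sums S" for i
  proof -
    have "(\<lambda>j. (\<lambda>j. if i \<le> j then of_real (cw b (j-i)) * (q * t) ^ (j-i) else 0) (j + i)) sums S"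
      using nb by simp
    then show ?thesis by (subst (asm) sums_zero_iff_shift) auto
  qed
  have "(\<lambda>j. Bc b \<alpha> i * t ^ i * (if i \<le> j then of_real (cw b (j-i)) * (q * t) ^ (j-i) else 0)) sums (Bc b \<alpha> i * t ^ i * S)" for i
    by (rule sums_mult[OF sh])
  then have "(\<lambda>j. \<Sum>i\<le>b+2. Bc b \<alpha> i * t ^ i * (if i \<le> j then of_real (cw b (j-i)) * (q * t) ^ (j-i) else 0))
      sums (\<Sum>i\<le>b+2. Bc b \<alpha> i * t ^ i * S)"
    by (rule sums_sum)
  moreover have "(\<Sum>i\<le>b+2. Bc b \<alpha> i * t ^ i * S) = (1 - cnj \<alpha> * t) ^ (b+2) * S"
    by (simp only: poly_expand sum_distrib_right)
  moreover have "(\<Sum>i\<le>b+2. Bc b \<alpha> i * t ^ i * (if i \<le> j then of_real (cw b (j-i)) * (q * t) ^ (j-i) else 0))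
      = Ec b \<alpha> q j * t ^ j" for j
    unfolding Ec_def sum_distrib_right
  proof (intro sum.cong refl)
    fix i assume "i \<in> {..b+2}"
    show "Bc b \<alpha> i * t ^ i * (if i \<le> j then of_real (cw b (j-i)) * (q * t) ^ (j-i) else 0) =
      (if i \<le> j then Bc b \<alpha> i * of_real (cw b (j-i)) * q ^ (j-i) else 0) * t ^ j"
    proof (cases "i \<le> j")
      case True
      then have "t ^ j = t ^ i * t ^ (j - i)" by (simp add: power_add[symmetric])
      then show ?thesis using True by (simp add: power_mult_distrib mult_ac)
    qed simp
  qed
  ultimately show ?thesis unfolding S_def by simp
qed


lemma moeb_id1:
  assumes u: "1 - cnj \<alpha> * u \<noteq> 0" and t: "1 - cnj \<alpha> * t \<noteq> 0"
  shows "1 - cnj (moebius \<alpha> u) * moebius \<alpha> t =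
     (1 - \<alpha> * cnj \<alpha>) * (1 - cnj u * t) / ((1 - \<alpha> * cnj u) * (1 - cnj \<alpha> * t))"
proof -
  have u': "1 - \<alpha> * cnj u \<noteq> 0" using u by (metis complex_cnj_cnj complex_cnj_diff complex_cnj_mult complex_cnj_one complex_cnj_zero)
  have "cnj (moebius \<alpha> u) = (cnj \<alpha> - cnj u) / (1 - \<alpha> * cnj u)"
    unfolding moebius_def by simp
  then have "1 - cnj (moebius \<alpha> u) * moebius \<alpha> t = 1 - ((cnj \<alpha> - cnj u) * (\<alpha> - t)) / ((1 - \<alpha> * cnj u) * (1 - cnj \<alpha> * t))"
    unfolding moebius_def by simp
  also have "\<dots> = ((1 - \<alpha> * cnj u) * (1 - cnj \<alpha> * t) - (cnj \<alpha> - cnj u) * (\<alpha> - t)) / ((1 - \<alpha> * cnj u) * (1 - cnj \<alpha> * t))"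
    using u' t by (simp add: diff_divide_distrib)
  also have "(1 - \<alpha> * cnj u) * (1 - cnj \<alpha> * t) - (cnj \<alpha> - cnj u) * (\<alpha> - t) = (1 - \<alpha> * cnj \<alpha>) * (1 - cnj u * t)"
    by (simp add: algebra_simps)
  finally show ?thesis .
qed

lemma moeb_id2:
  assumes u: "1 - cnj \<alpha> * u \<noteq> 0"
  shows "1 - cnj \<alpha> * moebius \<alpha> u = (1 - \<alpha> * cnj \<alpha>) / (1 - cnj \<alpha> * u)"
  unfolding moebius_def using u by (simp add: field_simps)

lemma N_facts:
  assumes "norm \<alpha> < 1"
  shows "1 - \<alpha> * cnj \<alpha> = of_real (1 - (norm \<alpha>)^2)" "1 - \<alpha> * cnj \<alpha> \<noteq> 0"
proof -
  show e: "1 - \<alpha> * cnj \<alpha> = of_real (1 - (norm \<alpha>)^2)"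
    by (metis complex_norm_square of_real_diff of_real_1 of_real_power)
  have "(norm \<alpha>)^2 < 1" using assms by (simp add: power_less_one_iff abs_square_less_1)
  then show "1 - \<alpha> * cnj \<alpha> \<noteq> 0" unfolding e by (simp only: of_real_eq_0_iff)
qed


lemma inv_pow_aux:
  fixes N Y P Q :: complex
  shows "inverse ((N * Y / (P * Q)) ^ m) = (P / N) ^ m * (Q ^ m * inverse (Y ^ m))"
proof -
  have "inverse (N * Y / (P * Q)) = (P / N) * (Q * inverse Y)"
    by (simp add: divide_inverse inverse_mult_distrib mult_ac)
  have "inverse ((N * Y / (P * Q)) ^ m) = (inverse (N * Y / (P * Q))) ^ m"
    by (rule power_inverse[symmetric])
  also have "\<dots> = ((P / N) * (Q * inverse Y)) ^ m" by (simp only: \<open>inverse (N * Y / (P * Q)) = (P / N) * (Q * inverse Y)\<close>)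
  also have "\<dots> = (P / N) ^ m * (Q ^ m * inverse Y ^ m)" by (simp only: power_mult_distrib)
  finally show ?thesis by (simp only: power_inverse)
qed

lemma T_lemma:
  assumes a: "norm \<alpha> < 1" and u: "norm u < RR \<alpha>"
  shows "taylor_coeff (\<lambda>t. fun_of (K b (moebius \<alpha> u)) (moebius \<alpha> t)) n
       = ((1 - \<alpha> * cnj u) / (1 - \<alpha> * cnj \<alpha>)) ^ (b+2) * Ec b \<alpha> (cnj u) n"
proof -
  note rf = rr_facts[OF a]
  define N where "N = 1 - \<alpha> * cnj \<alpha>"
  define C where "C = ((1 - \<alpha> * cnj u) / N) ^ (b+2)"
  define z where "z = moebius \<alpha> u"
  have N0: "N \<noteq> 0" unfolding N_def using N_facts[OF a] by simp
  have u1: "1 - cnj \<alpha> * u \<noteq> 0" and z1: "norm z < 1" using rf(6)[OF u] unfolding z_def by auto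
  have u1': "1 - \<alpha> * cnj u \<noteq> 0" using u1
    by (metis complex_cnj_cnj complex_cnj_diff complex_cnj_mult complex_cnj_one complex_cnj_zero)
  define \<epsilon> where "\<epsilon> = min (RR \<alpha>) (1 / (norm u + 1))"
  have "0 < norm u + 1" by (smt (verit) norm_ge_zero)
  then have ep: "\<epsilon> > 0" unfolding \<epsilon>_def using rf by (simp add: RR_def)
  have "taylor_coeff (\<lambda>t. fun_of (K b (moebius \<alpha> u)) (moebius \<alpha> t)) n = C * Ec b \<alpha> (cnj u) n"
  proof (rule tc_unique[OF ep, where e = "\<lambda>j. C * Ec b \<alpha> (cnj u) j"])
    fix t :: complex assume t: "norm t < \<epsilon>"
    have tR: "norm t < RR \<alpha>" using t unfolding \<epsilon>_def by simp
    have t1: "1 - cnj \<alpha> * t \<noteq> 0" and pt: "norm (moebius \<alpha> t) < 1" using rf(6)[OF tR] by auto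
    have qt: "norm (cnj u * t) < 1"
    proof -
      have "norm t < 1 / (norm u + 1)" using t unfolding \<epsilon>_def by simp
      then have "norm t * (norm u + 1) < 1" by (simp add: field_simps add_pos_nonneg)
      moreover have "norm (cnj u * t) \<le> norm t * (norm u + 1)"
        by (simp add: norm_mult algebra_simps)
      ultimately show ?thesis by linarith
    qed
    have zp: "norm (cnj z * moebius \<alpha> t) < 1"
      using z1 pt by (simp add: norm_mult) (metis mult_strict_mono' norm_ge_zero mult_1 )
    have "(\<lambda>k. K b z k * moebius \<alpha> t ^ k) = (\<lambda>k. of_real (cw b k) * (cnj z * moebius \<alpha> t) ^ k)"
      unfolding K_def by (simp add: power_mult_distrib mult.assoc)
    then have g: "fun_of (K b z) (moebius \<alpha> t) = inverse ((1 - cnj z * moebius \<alpha> t) ^ (b+2))"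
      unfolding fun_of_def using negbin[OF zp, of b] by (simp add: sums_iff)
    have "1 - cnj z * moebius \<alpha> t = N * (1 - cnj u * t) / ((1 - \<alpha> * cnj u) * (1 - cnj \<alpha> * t))"
      unfolding z_def N_def by (rule moeb_id1[OF u1 t1])
    then have "inverse ((1 - cnj z * moebius \<alpha> t) ^ (b+2)) =
        inverse ((N * (1 - cnj u * t) / ((1 - \<alpha> * cnj u) * (1 - cnj \<alpha> * t))) ^ (b+2))" by simp
    also have "\<dots> = C * ((1 - cnj \<alpha> * t) ^ (b+2) * inverse ((1 - cnj u * t) ^ (b+2)))"
      unfolding C_def by (rule inv_pow_aux)
    finally have g2: "fun_of (K b z) (moebius \<alpha> t) = C * ((1 - cnj \<alpha> * t) ^ (b+2) * inverse ((1 - cnj u * t) ^ (b+2)))"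
      using g by simp
    from sums_mult[OF prod_series[OF qt, of b \<alpha>], of C]
    show "(\<lambda>j. (C * Ec b \<alpha> (cnj u) j) * t ^ j) sums fun_of (K b (moebius \<alpha> u)) (moebius \<alpha> t)"
      using g2 unfolding z_def by (simp add: mult.assoc)
  qed
  then show ?thesis unfolding C_def N_def .
qed


lemma fun_of_V_phi:
  assumes a: "norm \<alpha> < 1" and u: "norm u < RR \<alpha>"
  shows "fun_of (V b \<alpha> n) (moebius \<alpha> u) =
    (\<Sum>x\<in>{..b+2} \<times> {i\<in>{..b+2}. i \<le> n}.
       (case x of (l, i) \<Rightarrow> of_real (bw b n) / (1 - \<alpha> * cnj \<alpha>) ^ (b+2) * Bc b \<alpha> l * cnj (Bc b \<alpha> i) * of_real (cw b (n-i)))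
       * u ^ (case x of (l, i) \<Rightarrow> l + (n - i)))"
proof -
  note rf = rr_facts[OF a]
  define N where "N = 1 - \<alpha> * cnj \<alpha>"
  define I where "I = {i\<in>{..b+2}. i \<le> n}"
  have c1: "cnj N = N" unfolding N_def using N_facts(1)[OF a] by (metis complex_cnj_complex_of_real)
  have z1: "norm (moebius \<alpha> u) < 1" using rf(6)[OF u] by auto
  have e0: "fun_of (V b \<alpha> n) (moebius \<alpha> u) = of_real (bw b n) * cnj (((1 - \<alpha> * cnj u) / N) ^ (b+2) * Ec b \<alpha> (cnj u) n)"
    unfolding fun_of_V[OF a z1] T_lemma[OF a u] N_def ..
  have e1: "cnj (((1 - \<alpha> * cnj u) / N) ^ (b+2)) = (1 - cnj \<alpha> * u) ^ (b+2) / N ^ (b+2)"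
    using c1 by (simp add: power_divide mult.commute)
  have e2: "cnj (Ec b \<alpha> (cnj u) n) = (\<Sum>i\<in>I. cnj (Bc b \<alpha> i) * of_real (cw b (n-i)) * u ^ (n-i))"
  proof -
    have "cnj (Ec b \<alpha> (cnj u) n) = (\<Sum>i\<le>b+2. if i \<le> n then cnj (Bc b \<alpha> i) * of_real (cw b (n-i)) * u ^ (n-i) else 0)"
      unfolding Ec_def cnj_sum by (intro sum.cong refl) auto
    also have "\<dots> = (\<Sum>i\<in>I. cnj (Bc b \<alpha> i) * of_real (cw b (n-i)) * u ^ (n-i))"
      unfolding I_def by (subst sum.inter_filter) auto
    finally show ?thesis .
  qed
  have e3: "(1 - cnj \<alpha> * u) ^ (b+2) = (\<Sum>l\<le>b+2. Bc b \<alpha> l * u ^ l)" by (rule poly_expand)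
  have "fun_of (V b \<alpha> n) (moebius \<alpha> u) = (of_real (bw b n) / N ^ (b+2)) *
      ((\<Sum>l\<le>b+2. Bc b \<alpha> l * u ^ l) * (\<Sum>i\<in>I. cnj (Bc b \<alpha> i) * of_real (cw b (n-i)) * u ^ (n-i)))"
    unfolding e0 complex_cnj_mult e1 e2 e3[symmetric] by simp
  also have "\<dots> = (of_real (bw b n) / N ^ (b+2)) *
      (\<Sum>l\<le>b+2. \<Sum>i\<in>I. Bc b \<alpha> l * u ^ l * (cnj (Bc b \<alpha> i) * of_real (cw b (n-i)) * u ^ (n-i)))"
    by (simp only: sum_product)
  also have "\<dots> = (of_real (bw b n) / N ^ (b+2)) *
      (\<Sum>x\<in>{..b+2} \<times> I. Bc b \<alpha> (fst x) * u ^ (fst x) * (cnj (Bc b \<alpha> (snd x)) * of_real (cw b (n - snd x)) * u ^ (n - snd x)))"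
    by (simp only: sum.cartesian_product split_def)
  also have "\<dots> = (\<Sum>x\<in>{..b+2} \<times> I.
       (case x of (l, i) \<Rightarrow> of_real (bw b n) / N ^ (b+2) * Bc b \<alpha> l * cnj (Bc b \<alpha> i) * of_real (cw b (n-i)))
       * u ^ (case x of (l, i) \<Rightarrow> l + (n - i)))"
    unfolding sum_distrib_left
    by (intro sum.cong refl) (auto simp: power_add mult_ac)
  finally show ?thesis unfolding N_def I_def .
qed

theorem lemma5p5:
  fixes \<beta> :: nat and \<alpha> :: complex and n m :: nat
  assumes "\<alpha> \<in> ball 0 1" and "\<alpha> \<noteq> 0"
    and "\<bar>int n - int m\<bar> \<ge> int \<beta> + 3"
  shows "A2_inner (real \<beta>)
           (comp_adj (real \<beta>) (moebius \<alpha>) (monomial n))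
           (comp_adj (real \<beta>) (moebius \<alpha>) (monomial m)) = 0"
proof -
  have a: "norm \<alpha> < 1" using assms(1) by simp
  have "taylor_coeff (\<lambda>z. fun_of (V \<beta> \<alpha> n) (moebius \<alpha> z)) m = 0"
  proof (rule poly_tc_zero[OF _ _ fun_of_V_phi[OF a]])
    show "0 < RR \<alpha>" using rr_facts[OF a] by linarith
    show "finite ({..\<beta>+2} \<times> {i\<in>{..\<beta>+2}. i \<le> n})" by auto
    fix x assume "x \<in> {..\<beta>+2} \<times> {i\<in>{..\<beta>+2}. i \<le> n}"
    then obtain l i where x: "x = (l, i)" "l \<le> \<beta>+2" "i \<le> \<beta>+2" "i \<le> n" by auto
    show "(case x of (l, i) \<Rightarrow> l + (n - i)) \<noteq> m"
      using x assms(3) by auto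
  qed
  then show ?thesis
    unfolding comp_adj_eq[OF a] inner_VV[OF a] by simp
qed

end
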